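(* There exists a constant $c>0$ such that, for every positive integer $L \geq 1$, \[ \mathbb{P}_{L^{1/2}}[r_{L} < 8 L] \leq c\,L\,e^{-L^{1/2}/c}. \]
   Context: Let $d\ge1$, $\{e_i\}$ the canonical basis of $\mathbb{Z}^d$, and $p(\cdot)$ a nearest-neighbour probability distribution on $\mathbb{Z}^d$ (supported on $\{\pm e_i\}$) with $0<p(e_i)\le p(-e_i)<1$ for all $i$. Under $\mathbb{P}_\rho$ (here $\rho=L^{1/2}$), each site initially holds i.i.d. $\mathrm{Poisson}(\rho)$ particles which move as independent continuous-time random walks jumping at rate $1$ with increment law $p$. Infection: at time $0$ an additional infected particle is placed at the origin and the particles at the origin are infected; a healthy particle becomes infected instantaneously when it shares a site with an infected particle; no recovery. $\xi_t(x)$ is the number of infected particles at $x$ at time $t$ and $r_t=\sup\{\langle x,e_1\rangle:\xi_t(x)>0\}$. *)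

theory Defs
  imports "HOL-Probability.Probability"
begin

(* Particle labels: Some (x,k) = k-th particle initially at site x (present iff k < N x);
   None = the additional infected particle placed at the origin. *)
type_synonym 'd label = "((int^'d) \<times> nat) option"

(* Sources of randomness: Poisson occupation numbers, exponential waiting times, jump increments *)
datatype ('d::finite) src = SN "int^'d" | SE "'d label" nat | SJ "'d label" nat

definition jump_prob :: "('d::finite \<Rightarrow> real) \<Rightarrow> ('d \<Rightarrow> real) \<Rightarrow> int^'d \<Rightarrow> real" where
  "jump_prob pp pm z = (\<Sum>i\<in>UNIV. (if z = axis i 1 then pp i else 0) + (if z = axis i (-1) then pm i else 0))"

(* time of the (n+1)-th jump of the walk of particle l *)
definition jump_time :: "('d label \<Rightarrow> nat \<Rightarrow> 'a \<Rightarrow> real) \<Rightarrow> 'd label \<Rightarrow> nat \<Rightarrow> 'a \<Rightarrow> real" where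
  "jump_time E l n \<omega> = (\<Sum>m\<le>n. E l m \<omega>)"

definition start :: "('d::finite) label \<Rightarrow> int^'d" where
  "start l = (case l of None \<Rightarrow> 0 | Some (x, k) \<Rightarrow> x)"

definition pos :: "('d::finite label \<Rightarrow> nat \<Rightarrow> 'a \<Rightarrow> real) \<Rightarrow> ('d label \<Rightarrow> nat \<Rightarrow> 'a \<Rightarrow> int^'d)
    \<Rightarrow> 'a \<Rightarrow> 'd label \<Rightarrow> real \<Rightarrow> int^'d" where
  "pos E J \<omega> l t = start l + (\<Sum>n\<in>{n. jump_time E l n \<omega> \<le> t}. J l n \<omega>)"

definition present :: "(int^'d \<Rightarrow> 'a \<Rightarrow> nat) \<Rightarrow> 'a \<Rightarrow> ('d::finite) label \<Rightarrow> bool" where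
  "present N \<omega> l = (case l of None \<Rightarrow> True | Some (x, k) \<Rightarrow> k < N x \<omega>)"

definition init_inf :: "(int^'d \<Rightarrow> 'a \<Rightarrow> nat) \<Rightarrow> 'a \<Rightarrow> ('d::finite) label \<Rightarrow> bool" where
  "init_inf N \<omega> l = (case l of None \<Rightarrow> True | Some (x, k) \<Rightarrow> x = 0 \<and> k < N x \<omega>)"

(* infected pr ps ini t j : particle j is infected by time t (instantaneous infection, no recovery):
   there is a transmission chain from an initially infected particle. *)
inductive infected :: "('l \<Rightarrow> bool) \<Rightarrow> ('l \<Rightarrow> real \<Rightarrow> 'p) \<Rightarrow> ('l \<Rightarrow> bool) \<Rightarrow> real \<Rightarrow> 'l \<Rightarrow> bool"
  for pr ps ini where
  init: "ini j \<Longrightarrow> 0 \<le> t \<Longrightarrow> infected pr ps ini t j"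
| spread: "infected pr ps ini s i \<Longrightarrow> s \<le> u \<Longrightarrow> u \<le> t \<Longrightarrow> pr j \<Longrightarrow> ps i u = ps j u
           \<Longrightarrow> infected pr ps ini t j"

definition ecount :: "'b set \<Rightarrow> enat" where
  "ecount S = (if finite S then enat (card S) else \<infinity>)"

definition xi :: "(int^'d \<Rightarrow> 'a \<Rightarrow> nat) \<Rightarrow> ('d::finite label \<Rightarrow> nat \<Rightarrow> 'a \<Rightarrow> real)
    \<Rightarrow> ('d label \<Rightarrow> nat \<Rightarrow> 'a \<Rightarrow> int^'d) \<Rightarrow> real \<Rightarrow> 'a \<Rightarrow> int^'d \<Rightarrow> enat" where
  "xi N E J t \<omega> x = ecount {j. present N \<omega> j \<and>
      infected (present N \<omega>) (pos E J \<omega>) (init_inf N \<omega>) t j \<and> pos E J \<omega> j t = x}"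

definition rfront :: "'d \<Rightarrow> (int^'d \<Rightarrow> 'a \<Rightarrow> nat) \<Rightarrow> ('d::finite label \<Rightarrow> nat \<Rightarrow> 'a \<Rightarrow> real)
    \<Rightarrow> ('d label \<Rightarrow> nat \<Rightarrow> 'a \<Rightarrow> int^'d) \<Rightarrow> real \<Rightarrow> 'a \<Rightarrow> ereal" where
  "rfront i0 N E J t \<omega> = Sup {ereal (real_of_int (x $ i0)) | x. xi N E J t \<omega> x > 0}"

definition src_events :: "'a measure \<Rightarrow> (int^'d \<Rightarrow> 'a \<Rightarrow> nat) \<Rightarrow> ('d::finite label \<Rightarrow> nat \<Rightarrow> 'a \<Rightarrow> real)
    \<Rightarrow> ('d label \<Rightarrow> nat \<Rightarrow> 'a \<Rightarrow> int^'d) \<Rightarrow> 'd src \<Rightarrow> 'a set set" where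
  "src_events M N E J s = (case s of
      SN x \<Rightarrow> {N x -` A \<inter> space M | A. A \<in> sets (count_space UNIV)}
    | SE l n \<Rightarrow> {E l n -` A \<inter> space M | A. A \<in> sets borel}
    | SJ l n \<Rightarrow> {J l n -` A \<inter> space M | A. A \<in> sets (count_space UNIV)})"

definition frog_model :: "'a measure \<Rightarrow> ('d::finite \<Rightarrow> real) \<Rightarrow> ('d \<Rightarrow> real) \<Rightarrow> real
    \<Rightarrow> (int^'d \<Rightarrow> 'a \<Rightarrow> nat) \<Rightarrow> ('d label \<Rightarrow> nat \<Rightarrow> 'a \<Rightarrow> real)
    \<Rightarrow> ('d label \<Rightarrow> nat \<Rightarrow> 'a \<Rightarrow> int^'d) \<Rightarrow> bool" where
  "frog_model M pp pm rho N E J \<longleftrightarrow>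
     prob_space M \<and>
     (\<forall>x. N x \<in> measurable M (count_space UNIV) \<and>
          (\<forall>k. measure M {\<omega>\<in>space M. N x \<omega> = k} = pmf (poisson_pmf rho) k)) \<and>
     (\<forall>l n. distributed M lborel (E l n) (exponential_density 1)) \<and>
     (\<forall>l n. J l n \<in> measurable M (count_space UNIV) \<and>
          (\<forall>z. measure M {\<omega>\<in>space M. J l n \<omega> = z} = jump_prob pp pm z)) \<and>
     prob_space.indep_sets M (src_events M N E J) UNIV"

end

theory Submission
  imports Defs
begin

lemma Int_stable_vimage: "Int_stable {f -` A \<inter> space M | A. A \<in> sets N}"
  unfolding Int_stable_def
proof safe
  fix A B assume "A \<in> sets N" "B \<in> sets N"
  then show "\<exists>C. (f -` A \<inter> space M) \<inter> (f -` B \<inter> space M) = f -` C \<inter> space M \<and> C \<in> sets N"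
    by (intro exI[of _ "A \<inter> B"]) auto
qed

locale frog =
  fixes M :: "'a measure" and pp pm :: "'d::finite \<Rightarrow> real" and rho :: real
    and N :: "int^'d \<Rightarrow> 'a \<Rightarrow> nat" and E :: "'d label \<Rightarrow> nat \<Rightarrow> 'a \<Rightarrow> real"
    and J :: "'d label \<Rightarrow> nat \<Rightarrow> 'a \<Rightarrow> int^'d"
  assumes fm: "frog_model M pp pm rho N E J"
begin

sublocale prob_space M using fm by (simp add: frog_model_def)

abbreviation "sev \<equiv> src_events M N E J"

lemma indep_src: "indep_sets sev UNIV" using fm by (simp add: frog_model_def)

lemma Int_stable_ev: "Int_stable (sev s)"
proof (cases s)
  case (SN x) show ?thesis using Int_stable_vimage[of "N x" M "count_space UNIV"] by (simp add: SN src_events_def)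
next
  case (SE l n) show ?thesis using Int_stable_vimage[of "E l n" M borel] by (simp add: SE src_events_def)
next
  case (SJ l n) show ?thesis using Int_stable_vimage[of "J l n" M "count_space UNIV"] by (simp add: SJ src_events_def)
qed

lemma ev_Pow: "sev s \<subseteq> Pow (space M)"
  by (cases s) (auto simp: src_events_def)

lemma block_indep:
  assumes "disjoint_family_on B I"
  shows "indep_sets (\<lambda>i. sigma_sets (space M) (\<Union>s\<in>B i. sev s)) I"
  by (rule indep_sets_collect_sigma[OF indep_sets_mono_index[OF _ indep_src] Int_stable_ev assms]) auto

definition Sg :: "'d src set \<Rightarrow> 'a measure" where
  "Sg B = sigma (space M) (\<Union>s\<in>B. sev s)"

lemma space_Sg[simp]: "space (Sg B) = space M"
  unfolding Sg_def using ev_Pow by (subst space_measure_of) auto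

lemma sets_Sg: "sets (Sg B) = sigma_sets (space M) (\<Union>s\<in>B. sev s)"
  unfolding Sg_def using ev_Pow by (subst sets_measure_of) auto

lemma N_Sg: "SN y \<in> B \<Longrightarrow> N y \<in> measurable (Sg B) (count_space UNIV)"
  unfolding measurable_def sets_Sg
  by (fastforce intro!: sigma_sets.Basic bexI[of _ "SN y"] simp: src_events_def)

lemma E_Sg: "SE l n \<in> B \<Longrightarrow> E l n \<in> borel_measurable (Sg B)"
  unfolding measurable_def sets_Sg
  by (fastforce intro!: sigma_sets.Basic bexI[of _ "SE l n"] simp: src_events_def)

lemma J_Sg: "SJ l n \<in> B \<Longrightarrow> J l n \<in> measurable (Sg B) (count_space UNIV)"
  unfolding measurable_def sets_Sg
  by (fastforce intro!: sigma_sets.Basic bexI[of _ "SJ l n"] simp: src_events_def)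

lemma Sg_sets_sub: "sets (Sg B) \<subseteq> sets M"
  unfolding sets_Sg using indep_src
  by (intro sigma_sets_le_sets_iff[THEN iffD2]) (auto simp: indep_sets_def)


lemma blocks_prob:
  assumes "disjoint_family_on B I" "finite I" "I \<noteq> {}" "\<And>i. i \<in> I \<Longrightarrow> A i \<in> sets (Sg (B i))"
  shows "prob (\<Inter>i\<in>I. A i) = (\<Prod>i\<in>I. prob (A i))"
  using assms by (intro indep_setsD[OF block_indep[OF assms(1)]]) (auto simp: sets_Sg)

definition XX :: "'d label \<Rightarrow> nat + nat \<Rightarrow> 'a \<Rightarrow> real \<times> (int^'d)" where
  "XX l i \<omega> = (case i of Inl n \<Rightarrow> (E l n \<omega>, 0) | Inr n \<Rightarrow> (0, J l n \<omega>))"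

abbreviation "PM \<equiv> (borel \<Otimes>\<^sub>M count_space UNIV :: (real \<times> (int^'d)) measure)"
abbreviation "OM \<equiv> (\<Pi>\<^sub>M i\<in>(UNIV::(nat+nat) set). PM)"

definition BX :: "'d label \<Rightarrow> nat + nat \<Rightarrow> 'd src set" where
  "BX l i = (case i of Inl n \<Rightarrow> {SE l n} | Inr n \<Rightarrow> {SJ l n})"

lemma XX_Sg: "BX l i \<subseteq> B \<Longrightarrow> XX l i \<in> measurable (Sg B) PM"
proof (cases i)
  case (Inl n)
  assume "BX l i \<subseteq> B"
  then have "SE l n \<in> B" using Inl by (simp add: BX_def)
  moreover have "XX l i = (\<lambda>\<omega>. (E l n \<omega>, 0))" using Inl by (simp add: XX_def fun_eq_iff)
  ultimately show ?thesis by (auto intro!: measurable_Pair E_Sg)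
next
  case (Inr n)
  assume "BX l i \<subseteq> B"
  then have "SJ l n \<in> B" using Inr by (simp add: BX_def)
  moreover have "XX l i = (\<lambda>\<omega>. (0, J l n \<omega>))" using Inr by (simp add: XX_def fun_eq_iff)
  ultimately show ?thesis by (auto intro!: measurable_Pair J_Sg)
qed

lemma XX_meas: "XX l i \<in> measurable M PM"
  using XX_Sg[OF order_refl, of l i] Sg_sets_sub[of "BX l i"]
  by (auto simp: measurable_def)

lemma indep_XX: "indep_vars (\<lambda>_. PM) (XX l) UNIV"
  unfolding indep_vars_def
proof
  show "\<forall>i\<in>UNIV. random_variable PM (XX l i)" using XX_meas by auto
  have dj: "disjoint_family_on (BX l) UNIV"
    by (auto simp: disjoint_family_on_def BX_def split: sum.splits)
  show "indep_sets (\<lambda>i. sigma_sets (space M) {XX l i -` A \<inter> space M |A. A \<in> sets PM}) UNIV"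
  proof (rule indep_sets_mono_sets[OF block_indep[OF dj]])
    fix i :: "nat + nat"
    have "{XX l i -` A \<inter> space M |A. A \<in> sets PM} \<subseteq> sets (Sg (BX l i))"
      using XX_Sg[OF order_refl, of l i] by (auto simp: measurable_def)
    then show "sigma_sets (space M) {XX l i -` A \<inter> space M |A. A \<in> sets PM}
        \<subseteq> sigma_sets (space M) (\<Union>s\<in>BX l i. sev s)"
      by (intro sigma_sets_mono) (simp add: sets_Sg)
  qed
qed

lemma distr_E: "distr M borel (E l n) = density lborel (exponential_density 1)"
proof -
  have d: "distributed M lborel (E l n) (exponential_density 1)" using fm by (simp add: frog_model_def)
  have "distr M borel (E l n) = distr M lborel (E l n)" by (rule distr_cong) auto
  also have "\<dots> = density lborel (exponential_density 1)"
    using d by (simp add: distributed_distr_eq_density)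
  finally show ?thesis .
qed

lemma distr_J: "distr M (count_space UNIV) (J l n) = distr M (count_space UNIV) (J l' n)"
proof (rule measure_eqI_countable)
  have m: "\<And>l. J l n \<in> measurable M (count_space UNIV)" using fm unfolding frog_model_def by blast
  have p: "\<And>l z. measure M {\<omega>\<in>space M. J l n \<omega> = z} = jump_prob pp pm z" using fm unfolding frog_model_def by blast
  fix a :: "int^'d"
  have "emeasure (distr M (count_space UNIV) (J l n)) {a} = ennreal (jump_prob pp pm a)" for l
  proof -
    have "emeasure (distr M (count_space UNIV) (J l n)) {a} = emeasure M (J l n -` {a} \<inter> space M)"
      by (rule emeasure_distr[OF m]) simp
    also have "J l n -` {a} \<inter> space M = {\<omega>\<in>space M. J l n \<omega> = a}" by blast
    also have "emeasure M \<dots> = ennreal (jump_prob pp pm a)"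
      using p[of l a] by (simp add: emeasure_eq_measure)
    finally show ?thesis .
  qed
  then show "emeasure (distr M (count_space UNIV) (J l n)) {a} = emeasure (distr M (count_space UNIV) (J l' n)) {a}"
    by simp
qed auto

lemma E_meas: "E l n \<in> borel_measurable M"
  using E_Sg[of l n UNIV] Sg_sets_sub[of UNIV] by (auto simp: measurable_def)

lemma J_meas: "J l n \<in> measurable M (count_space UNIV)"
  using fm unfolding frog_model_def by blast

lemma N_meas: "N y \<in> measurable M (count_space UNIV)"
  using fm unfolding frog_model_def by blast

lemma distr_XX: "distr M PM (XX l i) = distr M PM (XX l' i)"
proof (cases i)
  case (Inl n)
  have f: "(\<lambda>x::real. (x, 0::int^'d)) \<in> measurable borel PM" by (intro measurable_Pair) auto
  have "distr M PM (XX l i) = distr (distr M borel (E l n)) PM (\<lambda>x. (x, 0))" for l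
  proof -
    have "XX l i = (\<lambda>x. (x, 0)) \<circ> E l n" using Inl by (simp add: XX_def fun_eq_iff)
    then show ?thesis by (simp add: distr_distr[OF f E_meas])
  qed
  then show ?thesis by (simp add: distr_E)
next
  case (Inr n)
  have f: "(\<lambda>x. (0::real, x::int^'d)) \<in> measurable (count_space UNIV) PM" by (simp add: space_pair_measure)
  have "distr M PM (XX l i) = distr (distr M (count_space UNIV) (J l n)) PM (\<lambda>x. (0, x))" for l
  proof -
    have "XX l i = (\<lambda>x. (0, x)) \<circ> J l n" using Inr by (simp add: XX_def fun_eq_iff)
    then show ?thesis by (simp add: distr_distr[OF f J_meas])
  qed
  then show ?thesis using distr_J[of l n l'] by simp
qed

definition wk :: "'d label \<Rightarrow> 'a \<Rightarrow> nat + nat \<Rightarrow> real \<times> (int^'d)" where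
  "wk l \<omega> = (\<lambda>i. XX l i \<omega>)"


lemma law_eq: "distr M OM (wk l) = distr M OM (wk l')"
proof -
  have "distr M OM (wk l) = (\<Pi>\<^sub>M i\<in>UNIV. distr M PM (XX l i))" for l
  proof -
    have "distr M OM (\<lambda>x. \<lambda>i\<in>UNIV. XX l i x) = (\<Pi>\<^sub>M i\<in>UNIV. distr M PM (XX l i))"
      by (rule indep_vars_iff_distr_eq_PiM[THEN iffD1, OF _ XX_meas indep_XX]) simp
    moreover have "(\<lambda>x. \<lambda>i\<in>UNIV. XX l i x) = wk l" by (simp add: wk_def fun_eq_iff)
    ultimately show ?thesis by simp
  qed
  then show ?thesis using distr_XX[of l _ l'] by simp
qed

lemma wk_Sg: "(\<And>i. BX l i \<subseteq> B) \<Longrightarrow> wk l \<in> measurable (Sg B) OM"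
  unfolding wk_def by (rule measurable_PiM_single'[OF XX_Sg]) (auto simp: space_pair_measure)

lemma wk_meas: "wk l \<in> measurable M OM"
  unfolding wk_def by (rule measurable_PiM_single'[OF XX_meas]) (auto simp: space_pair_measure)

lemma prob_wk_eq: "S \<in> sets OM \<Longrightarrow> prob (wk l -` S \<inter> space M) = prob (wk l' -` S \<inter> space M)"
proof -
  assume S: "S \<in> sets OM"
  have "prob (wk l -` S \<inter> space M) = measure (distr M OM (wk l)) S" for l
    using S wk_meas by (simp add: measure_distr)
  then show ?thesis using law_eq[of l l'] by simp
qed

end

definition dl :: real where "dl = 1/10"

definition ET :: "(nat + nat \<Rightarrow> real \<times> (int^'d)) \<Rightarrow> nat \<Rightarrow> real" where
  "ET w j = fst (w (Inl j))"
definition JT :: "(nat + nat \<Rightarrow> real \<times> (int^'d)) \<Rightarrow> nat \<Rightarrow> int^'d" where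
  "JT w j = snd (w (Inr j))"
definition ST :: "(nat + nat \<Rightarrow> real \<times> (int^'d)) \<Rightarrow> nat \<Rightarrow> real" where
  "ST w k = (\<Sum>j\<le>k. ET w j)"

definition Wnw :: "int^'d \<Rightarrow> real \<Rightarrow> (nat + nat \<Rightarrow> real \<times> (int^'d)) \<Rightarrow> nat \<Rightarrow> bool" where
  "Wnw e a w n \<longleftrightarrow> (\<forall>k<n. ST w k \<le> a) \<and> a + dl < ST w n \<and> ST w n \<le> a + 2*dl \<and> JT w n = e
      \<and> 2*dl < ET w (Suc n)"

definition Gw :: "int^'d \<Rightarrow> real \<Rightarrow> int^'d \<Rightarrow> int^'d \<Rightarrow> (nat + nat \<Rightarrow> real \<times> (int^'d)) \<Rightarrow> bool" where
  "Gw e a x y w \<longleftrightarrow> (\<forall>j. 0 < ET w j) \<and> (\<exists>n. Wnw e a w n \<and> y + (\<Sum>j<n. JT w j) = x)"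

definition Cw :: "int^'d \<Rightarrow> real \<Rightarrow> (nat + nat \<Rightarrow> real \<times> (int^'d)) \<Rightarrow> bool" where
  "Cw e a w \<longleftrightarrow> (\<forall>j. 0 < ET w j) \<and> (\<exists>n. Wnw e a w n)"

lemma jt_mono:
  assumes "\<And>j. 0 < E l j \<omega>" "i \<le> k"
  shows "jump_time E l i \<omega> \<le> jump_time E l k \<omega>"
  unfolding jump_time_def using assms by (intro sum_mono2) (auto intro: less_imp_le)

lemma jt_Suc: "jump_time E l (Suc n) \<omega> = jump_time E l n \<omega> + E l (Suc n) \<omega>"
  by (simp add: jump_time_def)

lemma pos_before:
  assumes pos: "\<And>j. 0 < E l j \<omega>" and "\<forall>k<n. jump_time E l k \<omega> \<le> t" "t < jump_time E l n \<omega>"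
  shows "pos E J \<omega> l t = start l + (\<Sum>j<n. J l j \<omega>)"
proof -
  have "{j. jump_time E l j \<omega> \<le> t} = {..<n}"
  proof (intro set_eqI iffI)
    fix j assume "j \<in> {j. jump_time E l j \<omega> \<le> t}"
    then have "jump_time E l j \<omega> \<le> t" by simp
    show "j \<in> {..<n}"
    proof (rule ccontr)
      assume "j \<notin> {..<n}"
      then have "jump_time E l n \<omega> \<le> jump_time E l j \<omega>" by (intro jt_mono pos) auto
      then show False using assms \<open>jump_time E l j \<omega> \<le> t\<close> by linarith
    qed
  qed (use assms in auto)
  then show ?thesis by (simp add: pos_def)
qed

lemma pos_after:
  assumes pos: "\<And>j. 0 < E l j \<omega>" and "jump_time E l n \<omega> \<le> t" "t < jump_time E l (Suc n) \<omega>"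
  shows "pos E J \<omega> l t = start l + (\<Sum>j<Suc n. J l j \<omega>)"
proof -
  have "{j. jump_time E l j \<omega> \<le> t} = {..<Suc n}"
  proof (intro set_eqI iffI)
    fix j assume "j \<in> {j. jump_time E l j \<omega> \<le> t}"
    then have "jump_time E l j \<omega> \<le> t" by simp
    show "j \<in> {..<Suc n}"
    proof (rule ccontr)
      assume "j \<notin> {..<Suc n}"
      then have "jump_time E l (Suc n) \<omega> \<le> jump_time E l j \<omega>" by (intro jt_mono pos) auto
      then show False using assms \<open>jump_time E l j \<omega> \<le> t\<close> by linarith
    qed
  next
    fix j assume "j \<in> {..<Suc n}"
    then have "jump_time E l j \<omega> \<le> jump_time E l n \<omega>" by (intro jt_mono pos) auto
    then show "j \<in> {j. jump_time E l j \<omega> \<le> t}" using assms by simp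
  qed
  then show ?thesis by (simp add: pos_def)
qed

context frog begin

lemma ET_wk[simp]: "ET (wk l \<omega>) j = E l j \<omega>" by (simp add: ET_def wk_def XX_def)
lemma JT_wk[simp]: "JT (wk l \<omega>) j = J l j \<omega>" by (simp add: JT_def wk_def XX_def)
lemma ST_wk[simp]: "ST (wk l \<omega>) k = jump_time E l k \<omega>" by (simp add: ST_def jump_time_def)


lemma axis_add_int: "axis i (a::int) + axis i b = axis i (a + b)"
  by (simp add: vec_eq_iff axis_def)

lemma ecount_pos: "j \<in> S \<Longrightarrow> 0 < ecount S"
proof (cases "finite S")
  case True
  assume "j \<in> S"
  then have "0 < card S" using True card_gt_0_iff by blast
  then show ?thesis using True by (simp add: ecount_def zero_enat_def)
qed (simp add: ecount_def)

lemma chain: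
  fixes L :: nat and \<omega> :: 'a and i0 :: 'd
  assumes L: "1 \<le> L"
  and ch: "\<forall>m < 10*L - 2. \<exists>y k. k < N y \<omega> \<and> Gw (axis i0 1) (real m * dl) (axis i0 (int m)) y (wk (Some(y,k)) \<omega>)"
  shows "ereal (8 * real L) \<le> rfront i0 N E J (real L) \<omega>"
proof -
  define K where "K = 10*L - 2"
  define e :: "int^'d" where "e = axis i0 1"
  define x where "x m = (axis i0 (int m) :: int^'d)" for m
  have xs: "x m + e = x (Suc m)" for m by (simp add: x_def e_def axis_add_int add.commute)
  have dl: "dl = 1/10" by (simp add: dl_def)
  have rK: "real K = 10 * real L - 2" using L by (simp add: K_def of_nat_diff)
  have "\<forall>m. m < K \<longrightarrow> (\<exists>y k n. k < N y \<omega> \<and> (\<forall>j. 0 < E (Some(y,k)) j \<omega>) \<and>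
      Wnw e (real m * dl) (wk (Some (y, k)) \<omega>) n \<and> y + (\<Sum>j<n. J (Some(y,k)) j \<omega>) = x m)"
    using ch unfolding Gw_def K_def e_def x_def by simp
  then obtain Y KK NN where sel: "\<And>m. m < K \<Longrightarrow> KK m < N (Y m) \<omega> \<and> (\<forall>j. 0 < E (Some(Y m, KK m)) j \<omega>) \<and>
      Wnw e (real m * dl) (wk (Some (Y m, KK m)) \<omega>) (NN m) \<and> Y m + (\<Sum>j<NN m. J (Some(Y m, KK m)) j \<omega>) = x m"
    by metis
  define l where "l m = Some (Y m, KK m)" for m
  define \<tau> where "\<tau> m = jump_time E (l m) (NN m) \<omega>" for m
  have Epos: "\<And>j. 0 < E (l m) j \<omega>" if "m < K" for m using sel[OF that] by (simp add: l_def)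
  have W: "(\<forall>k<NN m. jump_time E (l m) k \<omega> \<le> real m * dl) \<and> real m * dl + dl < \<tau> m \<and> \<tau> m \<le> real m * dl + 2*dl
      \<and> J (l m) (NN m) \<omega> = e \<and> 2*dl < E (l m) (Suc (NN m)) \<omega>" if "m < K" for m
    using sel[OF that] by (simp add: Wnw_def l_def \<tau>_def)
  have st: "start (l m) = Y m" for m by (simp add: start_def l_def)
  have P1: "pos E J \<omega> (l m) t = x m" if "m < K" "real m * dl \<le> t" "t < \<tau> m" for m t
  proof -
    have "pos E J \<omega> (l m) t = start (l m) + (\<Sum>j<NN m. J (l m) j \<omega>)"
      using W[OF that(1)] that by (intro pos_before Epos) (auto simp: \<tau>_def)
    then show ?thesis using sel[OF that(1)] st by (simp add: l_def)
  qed
  have P2: "pos E J \<omega> (l m) t = x (Suc m)" if "m < K" "\<tau> m \<le> t" "t \<le> \<tau> m + 2*dl" for m t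
  proof -
    have "t < jump_time E (l m) (Suc (NN m)) \<omega>"
      using W[OF that(1)] that by (simp add: jt_Suc \<tau>_def)
    then have "pos E J \<omega> (l m) t = start (l m) + (\<Sum>j<Suc (NN m). J (l m) j \<omega>)"
      using that by (intro pos_after Epos) (auto simp: \<tau>_def)
    also have "\<dots> = (Y m + (\<Sum>j<NN m. J (l m) j \<omega>)) + e" using W[OF that(1)] st by (simp add: add.assoc)
    also have "\<dots> = x (Suc m)" using sel[OF that(1)] xs by (simp add: l_def)
    finally show ?thesis .
  qed
  have Y0: "Y 0 = 0" if "0 < K"
  proof -
    have "NN 0 = 0"
    proof (rule ccontr)
      assume "NN 0 \<noteq> 0"
      then have "jump_time E (l 0) 0 \<omega> \<le> 0" using W[OF that] by auto
      moreover have "jump_time E (l 0) 0 \<omega> = E (l 0) 0 \<omega>" by (simp add: jump_time_def)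
      ultimately show False using Epos[OF that, of 0] by simp
    qed
    then show ?thesis using sel[OF that] by (simp add: x_def)
  qed
  let ?inf = "infected (present N \<omega>) (pos E J \<omega>) (init_inf N \<omega>)"
  have INF: "m < K \<Longrightarrow> real (Suc m) * dl \<le> T \<Longrightarrow> ?inf T (l m)" for m T
  proof (induction m arbitrary: T)
    case 0
    have "init_inf N \<omega> (l 0)" using Y0 sel[of 0] 0 by (simp add: init_inf_def l_def)
    moreover have "0 \<le> T" using 0 by (simp add: dl)
    ultimately show ?case by (rule infected.init)
  next
    case (Suc m)
    have mK: "m < K" using Suc by simp
    have i1: "?inf (real (Suc m) * dl) (l m)" by (rule Suc.IH[OF mK]) simp
    show ?case
    proof (rule infected.spread[OF i1])
      show "real (Suc m) * dl \<le> \<tau> m" using W[OF mK] by (simp add: algebra_simps)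
      show "\<tau> m \<le> T" using W[OF mK] Suc.prems by (simp add: algebra_simps)
      show "present N \<omega> (l (Suc m))" using sel[OF Suc.prems(1)] by (simp add: present_def l_def)
      have "pos E J \<omega> (l m) (\<tau> m) = x (Suc m)" by (rule P2[OF mK]) (simp_all add: dl)
      moreover have "pos E J \<omega> (l (Suc m)) (\<tau> m) = x (Suc m)"
        using W[OF mK] W[OF Suc.prems(1)] by (intro P1 Suc.prems(1)) (auto simp: algebra_simps)
      ultimately show "pos E J \<omega> (l m) (\<tau> m) = pos E J \<omega> (l (Suc m)) (\<tau> m)" by simp
    qed
  qed
  have K1: "K - 1 < K" "Suc (K - 1) = K" using L by (auto simp: K_def)
  have inf: "?inf (real L) (l (K - 1))"
    by (rule INF[OF K1(1)]) (use K1(2) rK in \<open>simp add: dl\<close>)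
  have "pos E J \<omega> (l (K - 1)) (real L) = x K"
  proof -
    have "real (K - 1) = real K - 1" using K1 by (simp add: of_nat_diff)
    then have "pos E J \<omega> (l (K - 1)) (real L) = x (Suc (K - 1))"
      using W[OF K1(1)] rK by (intro P2[OF K1(1)]) (auto simp: dl algebra_simps)
    then show ?thesis using K1 by simp
  qed
  moreover have "present N \<omega> (l (K - 1))" using sel[OF K1(1)] by (simp add: present_def l_def)
  ultimately have "0 < xi N E J (real L) \<omega> (x K)"
    unfolding xi_def using inf by (intro ecount_pos[of "l (K - 1)"]) simp
  then have "ereal (real_of_int (x K $ i0)) \<le> rfront i0 N E J (real L) \<omega>"
    unfolding rfront_def by (intro Sup_upper) blast
  moreover have "x K $ i0 = int K" by (simp add: x_def)
  ultimately show ?thesis using rK L by (simp add: order_trans[rotated])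
qed

end

context frog begin

lemmas [measurable] = E_meas J_meas N_meas

lemma ev_gt[measurable]: "{\<omega>\<in>space M. v < E l n \<omega>} \<in> events" by measurable

lemma Sg_meas: "X \<in> measurable (Sg B) S \<Longrightarrow> X \<in> measurable M S"
  using Sg_sets_sub[of B] by (auto simp: measurable_def)

lemma Sg_sets: "A \<in> sets (Sg B) \<Longrightarrow> A \<in> sets M"
  using Sg_sets_sub[of B] by auto

lemma indep_var_Sg:
  assumes "B1 \<inter> B2 = {}" "X \<in> measurable (Sg B1) S" "Y \<in> measurable (Sg B2) T"
  shows "indep_var S X T Y"
  unfolding indep_var_def indep_vars_def
proof
  show "\<forall>i\<in>UNIV. random_variable (case_bool S T i) (case_bool X Y i)"
    using assms by (auto split: bool.split intro: Sg_meas)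
  have dj: "disjoint_family_on (case_bool B1 B2) UNIV"
    using assms(1) by (auto simp: disjoint_family_on_def split: bool.splits)
  show "indep_sets (\<lambda>i. sigma_sets (space M) {case_bool X Y i -` A \<inter> space M |A. A \<in> sets (case_bool S T i)}) UNIV"
  proof (rule indep_sets_mono_sets[OF block_indep[OF dj]])
    fix i :: bool
    have "{case_bool X Y i -` A \<inter> space M |A. A \<in> sets (case_bool S T i)} \<subseteq> sets (Sg (case_bool B1 B2 i))"
      using assms(2,3) by (cases i) (auto simp: measurable_def)
    then show "sigma_sets (space M) {case_bool X Y i -` A \<inter> space M |A. A \<in> sets (case_bool S T i)}
        \<subseteq> sigma_sets (space M) (\<Union>s\<in>case_bool B1 B2 i. sev s)"
      by (intro sigma_sets_mono) (simp add: sets_Sg)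
  qed
qed

lemma jt_Sg: "(\<And>j. j \<le> k \<Longrightarrow> SE l j \<in> B) \<Longrightarrow> (\<lambda>\<omega>. jump_time E l k \<omega>) \<in> borel_measurable (Sg B)"
  unfolding jump_time_def by (intro borel_measurable_sum E_Sg) auto

lemma expE_gt: "0 \<le> u \<Longrightarrow> prob {\<omega>\<in>space M. u < E l n \<omega>} = exp (- u)"
proof -
  assume u: "0 \<le> u"
  have d: "distributed M lborel (E l n) (exponential_density 1)" using fm unfolding frog_model_def by blast
  show ?thesis using exponential_distributedD_gt[OF d u] by simp
qed

lemma expE_int:
  assumes u: "0 \<le> u" and c: "0 \<le> c1" "c1 \<le> c2"
  shows "prob {\<omega>\<in>space M. u + c1 < E l n \<omega> \<and> E l n \<omega> \<le> u + c2} = exp (- u) * (exp (- c1) - exp (- c2))"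
proof -
  have "{\<omega>\<in>space M. u + c1 < E l n \<omega> \<and> E l n \<omega> \<le> u + c2} =
      {\<omega>\<in>space M. u + c1 < E l n \<omega>} - {\<omega>\<in>space M. u + c2 < E l n \<omega>}" by auto
  also have "prob \<dots> = prob {\<omega>\<in>space M. u + c1 < E l n \<omega>} - prob {\<omega>\<in>space M. u + c2 < E l n \<omega>}"
    using c by (intro finite_measure_Diff ev_gt) auto
  also have "\<dots> = exp (- (u + c1)) - exp (- (u + c2))"
    using u c by (simp add: expE_gt)
  also have "\<dots> = exp (- u) * (exp (- c1) - exp (- c2))"
    by (simp add: algebra_simps exp_add[symmetric])
  finally show ?thesis .
qed


lemma joint_emeasure:
  assumes ind: "indep_var borel U borel (E l n)" and S: "S \<in> sets (borel \<Otimes>\<^sub>M borel)"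
  shows "emeasure M {\<omega>\<in>space M. (U \<omega>, E l n \<omega>) \<in> S} =
    (\<integral>\<^sup>+u. emeasure (distr M borel (E l n)) (Pair u -` S) \<partial>(distr M borel U))"
proof -
  have rv: "random_variable borel U" using ind by (rule indep_var_rv1)
  have joint: "distr M borel U \<Otimes>\<^sub>M distr M borel (E l n) = distr M (borel \<Otimes>\<^sub>M borel) (\<lambda>\<omega>. (U \<omega>, E l n \<omega>))"
    using ind indep_var_distribution_eq by blast
  interpret DE: prob_space "distr M borel (E l n)" by (rule prob_space_distr) simp
  have "emeasure M {\<omega>\<in>space M. (U \<omega>, E l n \<omega>) \<in> S} = emeasure (distr M (borel \<Otimes>\<^sub>M borel) (\<lambda>\<omega>. (U \<omega>, E l n \<omega>))) S"
    using rv S by (subst emeasure_distr) (auto intro!: arg_cong[where f="emeasure M"])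
  also have "\<dots> = emeasure (distr M borel U \<Otimes>\<^sub>M distr M borel (E l n)) S" by (simp add: joint)
  also have "\<dots> = (\<integral>\<^sup>+u. emeasure (distr M borel (E l n)) (Pair u -` S) \<partial>(distr M borel U))"
    using S by (intro DE.emeasure_pair_measure_alt) simp
  finally show ?thesis .
qed

lemma emeasure_DE: "A \<in> sets borel \<Longrightarrow> emeasure (distr M borel (E l n)) A = emeasure M {\<omega>\<in>space M. E l n \<omega> \<in> A}"
  by (subst emeasure_distr) (auto intro!: arg_cong[where f="emeasure M"])

lemma pair_ratio:
  assumes ind: "indep_var borel U borel (E l n)"
  shows "prob {\<omega>\<in>space M. 0 \<le> U \<omega> \<and> U \<omega> + dl < E l n \<omega> \<and> E l n \<omega> \<le> U \<omega> + 2*dl}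
       = (exp (- dl) - exp (- (2*dl))) * prob {\<omega>\<in>space M. 0 \<le> U \<omega> \<and> U \<omega> < E l n \<omega>}"
proof -
  define C where "C = exp (- dl) - exp (- (2*dl))"
  have dl: "dl = 1/10" by (simp add: dl_def)
  have C0: "0 \<le> C" unfolding C_def by (simp add: dl)
  define SA where "SA = {p::real\<times>real. 0 \<le> fst p \<and> fst p + dl < snd p \<and> snd p \<le> fst p + 2*dl}"
  define SB where "SB = {p::real\<times>real. 0 \<le> fst p \<and> fst p < snd p}"
  have SA: "SA \<in> sets (borel \<Otimes>\<^sub>M borel)"
  proof -
    have "SA = {p\<in>space (borel \<Otimes>\<^sub>M borel). 0 \<le> fst p \<and> fst p + dl < snd p \<and> snd p \<le> fst p + 2*dl}"
      by (auto simp: SA_def space_pair_measure)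
    also have "\<dots> \<in> sets (borel \<Otimes>\<^sub>M borel)" by measurable
    finally show ?thesis .
  qed
  have SB: "SB \<in> sets (borel \<Otimes>\<^sub>M borel)"
  proof -
    have "SB = {p\<in>space (borel \<Otimes>\<^sub>M borel). 0 \<le> fst p \<and> fst p < snd p}"
      by (auto simp: SB_def space_pair_measure)
    also have "\<dots> \<in> sets (borel \<Otimes>\<^sub>M borel)" by measurable
    finally show ?thesis .
  qed
  have iA: "emeasure (distr M borel (E l n)) (Pair u -` SA) = ennreal C * (if 0 \<le> u then ennreal (exp (- u)) else 0)" for u
  proof (cases "0 \<le> u")
    case True
    have "Pair u -` SA = {v. u + dl < v \<and> v \<le> u + 2*dl}" using True by (auto simp: SA_def)
    then have "emeasure (distr M borel (E l n)) (Pair u -` SA) = emeasure M {\<omega>\<in>space M. u + dl < E l n \<omega> \<and> E l n \<omega> \<le> u + 2*dl}"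
      by (subst emeasure_DE) auto
    also have "\<dots> = ennreal (exp (- u) * C)"
      using True expE_int[OF True, of dl "2*dl" l n] by (simp add: emeasure_eq_measure C_def dl)
    finally show ?thesis using True C0 by (simp add: ennreal_mult mult.commute)
  next
    case False
    then have "Pair u -` SA = {}" by (auto simp: SA_def)
    then show ?thesis using False by simp
  qed
  have iB: "emeasure (distr M borel (E l n)) (Pair u -` SB) = (if 0 \<le> u then ennreal (exp (- u)) else 0)" for u
  proof (cases "0 \<le> u")
    case True
    have "Pair u -` SB = {v. u < v}" using True by (auto simp: SB_def)
    then have "emeasure (distr M borel (E l n)) (Pair u -` SB) = emeasure M {\<omega>\<in>space M. u < E l n \<omega>}"
      by (subst emeasure_DE) auto
    also have "\<dots> = ennreal (exp (- u))"
      using expE_gt[OF True, of l n] by (simp add: emeasure_eq_measure)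
    finally show ?thesis using True by simp
  next
    case False
    then have "Pair u -` SB = {}" by (auto simp: SB_def)
    then show ?thesis using False by simp
  qed
  have "emeasure M {\<omega>\<in>space M. (U \<omega>, E l n \<omega>) \<in> SA} = (\<integral>\<^sup>+u. ennreal C * (if 0 \<le> u then ennreal (exp (- u)) else 0) \<partial>(distr M borel U))"
    by (simp add: joint_emeasure[OF ind SA] iA)
  also have "\<dots> = ennreal C * (\<integral>\<^sup>+u. (if 0 \<le> u then ennreal (exp (- u)) else 0) \<partial>(distr M borel U))"
    by (intro nn_integral_cmult) measurable
  also have "(\<integral>\<^sup>+u. (if 0 \<le> u then ennreal (exp (- u)) else 0) \<partial>(distr M borel U)) = emeasure M {\<omega>\<in>space M. (U \<omega>, E l n \<omega>) \<in> SB}"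
    by (simp add: joint_emeasure[OF ind SB] iB)
  finally have eq: "emeasure M {\<omega>\<in>space M. (U \<omega>, E l n \<omega>) \<in> SA} = ennreal C * emeasure M {\<omega>\<in>space M. (U \<omega>, E l n \<omega>) \<in> SB}" .
  have "prob {\<omega>\<in>space M. (U \<omega>, E l n \<omega>) \<in> SA} = C * prob {\<omega>\<in>space M. (U \<omega>, E l n \<omega>) \<in> SB}"
    using eq C0 by (simp add: measure_def enn2real_mult)
  moreover have "{\<omega>\<in>space M. (U \<omega>, E l n \<omega>) \<in> SA} = {\<omega>\<in>space M. 0 \<le> U \<omega> \<and> U \<omega> + dl < E l n \<omega> \<and> E l n \<omega> \<le> U \<omega> + 2*dl}"
    by (auto simp: SA_def)
  moreover have "{\<omega>\<in>space M. (U \<omega>, E l n \<omega>) \<in> SB} = {\<omega>\<in>space M. 0 \<le> U \<omega> \<and> U \<omega> < E l n \<omega>}"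
    by (auto simp: SB_def)
  ultimately show ?thesis by (simp add: C_def)
qed


lemma jt_split: "jump_time E l n \<omega> = (\<Sum>j<n. E l j \<omega>) + E l n \<omega>"
  by (cases n) (simp_all add: jump_time_def atMost_Suc lessThan_Suc_atMost)

lemma set_jt_le_Sg:
  assumes "\<And>j. j \<le> k \<Longrightarrow> SE l j \<in> B"
  shows "{\<omega>\<in>space M. jump_time E l k \<omega> \<le> c} \<in> sets (Sg B)"
    "{\<omega>\<in>space M. c < jump_time E l k \<omega>} \<in> sets (Sg B)"
proof -
  have [measurable]: "(\<lambda>\<omega>. jump_time E l k \<omega>) \<in> borel_measurable (Sg B)" by (rule jt_Sg) (use assms in auto)
  have "{\<omega>\<in>space (Sg B). jump_time E l k \<omega> \<le> c} \<in> sets (Sg B)" by measurable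
  then show "{\<omega>\<in>space M. jump_time E l k \<omega> \<le> c} \<in> sets (Sg B)" by simp
  have "{\<omega>\<in>space (Sg B). c < jump_time E l k \<omega>} \<in> sets (Sg B)" by measurable
  then show "{\<omega>\<in>space M. c < jump_time E l k \<omega>} \<in> sets (Sg B)" by simp
qed

lemma set_allk_Sg:
  assumes "\<And>j. j < n \<Longrightarrow> SE l j \<in> B"
  shows "{\<omega>\<in>space M. \<forall>k<n. jump_time E l k \<omega> \<le> a} \<in> sets (Sg B)"
proof -
  have eq: "{\<omega>\<in>space M. \<forall>k<n. jump_time E l k \<omega> \<le> a} = {\<omega>\<in>space (Sg B). \<forall>k\<in>{..<n}. jump_time E l k \<omega> \<le> a}"
    by auto
  show ?thesis unfolding eq
    by (intro sets.sets_Collect_finite_All) (use set_jt_le_Sg(1)[of _ l B] assms in auto)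
qed

lemma An_Bn:
  assumes a: "0 \<le> a"
  shows "prob {\<omega>\<in>space M. (\<forall>k<n. jump_time E l k \<omega> \<le> a) \<and> a + dl < jump_time E l n \<omega> \<and> jump_time E l n \<omega> \<le> a + 2*dl}
    = (exp (- dl) - exp (- (2*dl))) * prob {\<omega>\<in>space M. (\<forall>k<n. jump_time E l k \<omega> \<le> a) \<and> a < jump_time E l n \<omega>}"
proof -
  define P where "P \<omega> \<longleftrightarrow> (\<forall>k<n. jump_time E l k \<omega> \<le> a)" for \<omega>
  define U where "U \<omega> = (if P \<omega> then a - (\<Sum>j<n. E l j \<omega>) else -1)" for \<omega>
  let ?B1 = "SE l ` {..<n}"
  have PS: "{\<omega>\<in>space (Sg ?B1). P \<omega>} \<in> sets (Sg ?B1)"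
  proof -
    have "{\<omega>\<in>space M. \<forall>k<n. jump_time E l k \<omega> \<le> a} \<in> sets (Sg ?B1)" by (rule set_allk_Sg) auto
    then show ?thesis unfolding space_Sg P_def .
  qed
  have Um: "U \<in> borel_measurable (Sg ?B1)"
    unfolding U_def
    by (intro measurable_If PS borel_measurable_diff borel_measurable_sum E_Sg measurable_const) auto
  have ind: "indep_var borel U borel (E l n)"
    by (rule indep_var_Sg[of ?B1 "{SE l n}", OF _ Um]) (auto intro: E_Sg)
  have U0: "0 \<le> U \<omega>" if "P \<omega>" for \<omega>
  proof (cases n)
    case 0 then show ?thesis using that a by (simp add: U_def)
  next
    case (Suc m)
    then have "jump_time E l m \<omega> \<le> a" using that by (simp add: P_def)
    then show ?thesis using that Suc by (simp add: U_def jump_time_def lessThan_Suc_atMost)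
  qed
  have "{\<omega>\<in>space M. (\<forall>k<n. jump_time E l k \<omega> \<le> a) \<and> a + dl < jump_time E l n \<omega> \<and> jump_time E l n \<omega> \<le> a + 2*dl}
     = {\<omega>\<in>space M. 0 \<le> U \<omega> \<and> U \<omega> + dl < E l n \<omega> \<and> E l n \<omega> \<le> U \<omega> + 2*dl}"
    using U0 by (auto simp: U_def P_def jt_split) 
  moreover have "{\<omega>\<in>space M. (\<forall>k<n. jump_time E l k \<omega> \<le> a) \<and> a < jump_time E l n \<omega>}
     = {\<omega>\<in>space M. 0 \<le> U \<omega> \<and> U \<omega> < E l n \<omega>}"
    using U0 by (auto simp: U_def P_def jt_split) 
  ultimately show ?thesis using pair_ratio[OF ind] by simp
qed

lemma jump_prob_e: "jump_prob pp pm (axis i0 1) = pp i0"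
proof -
  have "jump_prob pp pm (axis i0 1) = (\<Sum>i\<in>UNIV. if i0 = i then pp i else 0)"
    unfolding jump_prob_def by (intro sum.cong) (auto simp: axis_eq_axis)
  then show ?thesis by simp
qed

lemma Wn_prob:
  assumes a: "0 \<le> a"
  shows "prob {\<omega>\<in>space M. Wnw (axis i0 1) a (wk l \<omega>) n}
    = (exp (- dl) - exp (- (2*dl))) * pp i0 * exp (- (2*dl)) * prob {\<omega>\<in>space M. (\<forall>k<n. jump_time E l k \<omega> \<le> a) \<and> a < jump_time E l n \<omega>}"
proof -
  let ?e = "axis i0 1 :: int^'d"
  define A where "A i = (if i = (0::nat) then {\<omega>\<in>space M. (\<forall>k<n. jump_time E l k \<omega> \<le> a) \<and> a + dl < jump_time E l n \<omega> \<and> jump_time E l n \<omega> \<le> a + 2*dl}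
     else if i = 1 then {\<omega>\<in>space M. J l n \<omega> = ?e} else {\<omega>\<in>space M. 2*dl < E l (Suc n) \<omega>})" for i
  define B where "B i = (if i = (0::nat) then SE l ` {..n} else if i = 1 then {SJ l n} else {SE l (Suc n)})" for i
  have dj: "disjoint_family_on B {0,1,2}" by (auto simp: disjoint_family_on_def B_def)
  have AB: "A i \<in> sets (Sg (B i))" if "i \<in> {0,1,2}" for i
  proof -
    have "A 0 \<in> sets (Sg (B 0))"
    proof -
      have "A 0 = {\<omega>\<in>space M. \<forall>k<n. jump_time E l k \<omega> \<le> a} \<inter> {\<omega>\<in>space M. a + dl < jump_time E l n \<omega>}
          \<inter> ({\<omega>\<in>space M. jump_time E l n \<omega> \<le> a + 2*dl})" by (auto simp: A_def)
      also have "\<dots> \<in> sets (Sg (B 0))"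
        by (intro sets.Int set_allk_Sg set_jt_le_Sg) (auto simp: B_def)
      finally show ?thesis .
    qed
    moreover have "A 1 \<in> sets (Sg (B 1))"
    proof -
      have [measurable]: "J l n \<in> measurable (Sg (B 1)) (count_space UNIV)" by (rule J_Sg) (simp add: B_def)
      have "{\<omega>\<in>space (Sg (B 1)). J l n \<omega> = ?e} \<in> sets (Sg (B 1))" by measurable
      then show ?thesis by (simp add: A_def)
    qed
    moreover have "A 2 \<in> sets (Sg (B 2))"
    proof -
      have [measurable]: "E l (Suc n) \<in> borel_measurable (Sg (B 2))" by (rule E_Sg) (simp add: B_def)
      have "{\<omega>\<in>space (Sg (B 2)). 2*dl < E l (Suc n) \<omega>} \<in> sets (Sg (B 2))" by measurable
      then show ?thesis by (simp add: A_def)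
    qed
    ultimately show ?thesis using that by auto
  qed
  have "prob (\<Inter>i\<in>{0,1,2}. A i) = (\<Prod>i\<in>{0,1,2}. prob (A i))"
    by (rule blocks_prob[OF dj _ _ AB]) auto
  moreover have "{\<omega>\<in>space M. Wnw ?e a (wk l \<omega>) n} = (\<Inter>i\<in>{0,1,2}. A i)"
    by (auto simp: Wnw_def A_def)
  moreover have "prob (A 1) = pp i0"
  proof -
    have "prob (A 1) = jump_prob pp pm ?e" using fm unfolding frog_model_def A_def by simp
    then show ?thesis by (simp add: jump_prob_e)
  qed
  moreover have "prob (A 2) = exp (- (2*dl))" using expE_gt[of "2*dl" l "Suc n"] by (simp add: A_def dl_def)
  moreover have "prob (A 0) = (exp (- dl) - exp (- (2*dl))) * prob {\<omega>\<in>space M. (\<forall>k<n. jump_time E l k \<omega> \<le> a) \<and> a < jump_time E l n \<omega>}"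
    using An_Bn[OF a] by (simp add: A_def)
  ultimately show ?thesis by (simp add: ac_simps)
qed

end

context frog begin

lemma jt_meas[measurable]: "(\<lambda>\<omega>. jump_time E l k \<omega>) \<in> borel_measurable M"
  unfolding jump_time_def by measurable

lemma allpos: "prob {\<omega>\<in>space M. \<forall>j. 0 < E l j \<omega>} = 1"
proof -
  have "AE \<omega> in M. 0 < E l j \<omega>" for j
  proof -
    have "prob {\<omega>\<in>space M. 0 < E l j \<omega>} = 1" using expE_gt[of 0 l j] by simp
    then show ?thesis by (subst prob_Collect_eq_1[symmetric]) auto
  qed
  then have "AE \<omega> in M. \<forall>j. 0 < E l j \<omega>" by (simp add: AE_all_countable)
  then show ?thesis by (subst prob_Collect_eq_1) auto
qed

lemma prob_split: "X \<subseteq> space M \<Longrightarrow> X \<in> events \<Longrightarrow> Y \<in> events \<Longrightarrow> prob X \<le> prob (Y \<inter> X) + prob (space M - Y)"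
proof -
  assume X: "X \<subseteq> space M" "X \<in> events" and Y: "Y \<in> events"
  have "prob X \<le> prob ((Y \<inter> X) \<union> (space M - Y))" using X Y by (intro finite_measure_mono) auto
  also have "\<dots> \<le> prob (Y \<inter> X) + prob (space M - Y)" using X Y by (intro measure_Un_le) auto
  finally show ?thesis .
qed

lemma core_prob:
  assumes a: "0 \<le> a"
  shows "(exp (- dl) - exp (- (2*dl))) * pp i0 * exp (- (2*dl)) / 2 \<le> prob {\<omega>\<in>space M. Cw (axis i0 1) a (wk l \<omega>)}"
proof -
  let ?e = "axis i0 1 :: int^'d"
  define K where "K = (exp (- dl) - exp (- (2*dl))) * pp i0 * exp (- (2*dl))"
  have dl: "dl = 1/10" by (simp add: dl_def)
  have pp0: "0 \<le> pp i0"
  proof -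
    have "prob {\<omega>\<in>space M. J l 0 \<omega> = ?e} = jump_prob pp pm ?e" using fm unfolding frog_model_def by blast
    then show ?thesis using jump_prob_e[of i0] by (metis measure_nonneg)
  qed
  have K0: "0 \<le> K" unfolding K_def using pp0 by (simp add: dl)
  define Pos where "Pos = {\<omega>\<in>space M. \<forall>j. 0 < E l j \<omega>}"
  have Pos: "Pos \<in> events" unfolding Pos_def by measurable
  have Pos1: "prob (space M - Pos) = 0" using allpos[of l] prob_compl[OF Pos] by (simp add: Pos_def)
  define Bn where "Bn n = {\<omega>\<in>space M. (\<forall>k<n. jump_time E l k \<omega> \<le> a) \<and> a < jump_time E l n \<omega>}" for n
  define Wn where "Wn n = {\<omega>\<in>space M. Wnw ?e a (wk l \<omega>) n}" for n
  have Bn_ev: "Bn n \<in> events" for n unfolding Bn_def by measurable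
  have Wn_eq: "Wn n = {\<omega>\<in>space M. (\<forall>k<n. jump_time E l k \<omega> \<le> a) \<and> a + dl < jump_time E l n \<omega> \<and> jump_time E l n \<omega> \<le> a + 2*dl
      \<and> J l n \<omega> = ?e \<and> 2*dl < E l (Suc n) \<omega>}" for n
    by (simp add: Wn_def Wnw_def)
  have Wn_ev: "Wn n \<in> events" for n unfolding Wn_eq by measurable
  have WB: "prob (Wn n) = K * prob (Bn n)" for n
    using Wn_prob[OF a, of i0 l n] by (simp add: Wn_def Bn_def K_def)
  define q where "q = 1 - exp (- a)"
  have q: "0 \<le> q" "q < 1" using a by (auto simp: q_def)
  obtain n0 where n0: "q ^ n0 < 1/2" using real_arch_pow_inv[of "1/2" q] q by auto
  have n0': "q ^ Suc n0 \<le> 1/2"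
  proof -
    have "q ^ Suc n0 \<le> q ^ n0" using q by (simp add: mult_left_le_one_le power_le_one)
    then show ?thesis using n0 by simp
  qed
  define F where "F = {\<omega>\<in>space M. \<forall>k\<in>{..n0}. E l k \<omega> \<le> a}"
  have F_ev: "F \<in> events" unfolding F_def by measurable
  have PF: "prob F = q ^ Suc n0"
  proof -
    define A where "A k = {\<omega>\<in>space M. E l k \<omega> \<le> a}" for k
    have "prob (\<Inter>k\<in>{..n0}. A k) = (\<Prod>k\<in>{..n0}. prob (A k))"
    proof (rule blocks_prob[where B="\<lambda>k. {SE l k}"])
      show "disjoint_family_on (\<lambda>k. {SE l k}) {..n0}" by (auto simp: disjoint_family_on_def)
      fix k
      have [measurable]: "E l k \<in> borel_measurable (Sg {SE l k})" by (rule E_Sg) simp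
      have "{\<omega>\<in>space (Sg {SE l k}). E l k \<omega> \<le> a} \<in> sets (Sg {SE l k})" by measurable
      then show "A k \<in> sets (Sg {SE l k})" by (simp add: A_def)
    qed auto
    moreover have "(\<Inter>k\<in>{..n0}. A k) = F" by (auto simp: A_def F_def)
    moreover have "prob (A k) = q" for k
    proof -
      have d: "distributed M lborel (E l k) (exponential_density 1)" using fm unfolding frog_model_def by blast
      show ?thesis using exponential_distributedD_le[OF d a] by (simp add: A_def q_def)
    qed
    ultimately show ?thesis by simp
  qed
  have djB: "disjoint_family_on Bn {..n0}"
  proof (auto simp: disjoint_family_on_def)
    fix n n' \<omega> assume "n \<noteq> n'" "\<omega> \<in> Bn n" "\<omega> \<in> Bn n'"
    then show False unfolding Bn_def by (cases "n < n'") (auto dest: not_less_iff_gr_or_eq[THEN iffD1])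
  qed
  have incl: "Pos \<inter> (space M - F) \<subseteq> (\<Union>n\<in>{..n0}. Bn n)"
  proof
    fix \<omega> assume w: "\<omega> \<in> Pos \<inter> (space M - F)"
    then obtain k where k: "k \<le> n0" "a < E l k \<omega>" by (auto simp: F_def not_le)
    have pos: "\<And>j. 0 < E l j \<omega>" using w by (simp add: Pos_def)
    have "E l k \<omega> \<le> jump_time E l k \<omega>"
      unfolding jump_time_def by (rule member_le_sum) (auto intro: less_imp_le pos)
    moreover have "jump_time E l k \<omega> \<le> jump_time E l n0 \<omega>" using k(1) by (intro jt_mono pos)
    ultimately have ex: "a < jump_time E l n0 \<omega>" using k by simp
    define n where "n = (LEAST n. a < jump_time E l n \<omega>)"
    have "a < jump_time E l n \<omega>" unfolding n_def by (rule LeastI[of _ n0]) (rule ex)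
    moreover have "n \<le> n0" unfolding n_def by (rule Least_le) (rule ex)
    moreover have "\<forall>k<n. jump_time E l k \<omega> \<le> a" unfolding n_def using not_less_Least by force
    ultimately show "\<omega> \<in> (\<Union>n\<in>{..n0}. Bn n)" using w by (auto simp: Bn_def)
  qed
  have sumB: "(\<Sum>n\<in>{..n0}. prob (Bn n)) \<ge> 1/2"
  proof -
    have "(\<Sum>n\<in>{..n0}. prob (Bn n)) = prob (\<Union>n\<in>{..n0}. Bn n)"
      using djB Bn_ev by (intro finite_measure_finite_Union[symmetric]) auto
    also have "prob (\<Union>n\<in>{..n0}. Bn n) \<ge> prob (Pos \<inter> (space M - F))"
      using incl Bn_ev by (intro finite_measure_mono) auto
    moreover have "prob (space M - F) \<le> prob (Pos \<inter> (space M - F)) + prob (space M - Pos)"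
      using F_ev Pos by (intro prob_split) auto
    moreover have "prob (space M - F) = 1 - q ^ Suc n0" using prob_compl[OF F_ev] PF by simp
    ultimately show ?thesis using Pos1 n0' by linarith
  qed
  have djW: "disjoint_family_on Wn {..n0}"
  proof (auto simp: disjoint_family_on_def)
    fix n n' \<omega> assume "n \<noteq> n'" "\<omega> \<in> Wn n" "\<omega> \<in> Wn n'"
    moreover have "0 < dl" by (simp add: dl)
    ultimately show False unfolding Wn_eq by (cases "n < n'") (auto dest: not_less_iff_gr_or_eq[THEN iffD1])
  qed
  have "prob (\<Union>n\<in>{..n0}. Wn n) = (\<Sum>n\<in>{..n0}. prob (Wn n))"
    using djW Wn_ev by (intro finite_measure_finite_Union) auto
  also have "\<dots> = K * (\<Sum>n\<in>{..n0}. prob (Bn n))" by (simp add: WB sum_distrib_left)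
  finally have W2: "K / 2 \<le> prob (\<Union>n\<in>{..n0}. Wn n)" using sumB K0
    by (metis (no_types, lifting) mult_left_mono times_divide_eq_right mult.right_neutral)
  have "prob (\<Union>n\<in>{..n0}. Wn n) \<le> prob (Pos \<inter> (\<Union>n\<in>{..n0}. Wn n)) + prob (space M - Pos)"
    using Wn_ev Pos by (intro prob_split) (auto simp: Wn_def)
  also have "prob (Pos \<inter> (\<Union>n\<in>{..n0}. Wn n)) \<le> prob {\<omega>\<in>space M. Cw ?e a (wk l \<omega>)}"
  proof (rule finite_measure_mono)
    show "Pos \<inter> (\<Union>n\<in>{..n0}. Wn n) \<subseteq> {\<omega>\<in>space M. Cw ?e a (wk l \<omega>)}"
      by (auto simp: Pos_def Wn_def Cw_def)
    have "{\<omega>\<in>space M. Cw ?e a (wk l \<omega>)} = {\<omega>\<in>space M. (\<forall>j. 0 < E l j \<omega>) \<and> (\<exists>n. \<omega> \<in> Wn n)}"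
      by (auto simp: Cw_def Wn_def)
    also have "\<dots> \<in> events" using Wn_ev by measurable
    finally show "{\<omega>\<in>space M. Cw ?e a (wk l \<omega>)} \<in> events" .
  qed
  finally show ?thesis using W2 Pos1 by (simp add: K_def)
qed

end

context frog begin

lemma ET_OM[measurable]: "(\<lambda>w. ET w j) \<in> borel_measurable OM"
  unfolding ET_def by measurable

lemma JT_OM[measurable]: "(\<lambda>w. JT w j) \<in> measurable OM (count_space UNIV)"
  unfolding JT_def by measurable

lemma ST_OM[measurable]: "(\<lambda>w. ST w j) \<in> borel_measurable OM"
  unfolding ST_def by measurable

lemma sumJT_OM[measurable]: "(\<lambda>w. y + (\<Sum>j<n. JT w j)) \<in> measurable OM (count_space UNIV)"
proof (induction n arbitrary: y)
  case 0 then show ?case by simp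
next
  case (Suc n)
  have "(\<lambda>w. (\<lambda>z w. z + JT w n) (y + (\<Sum>j<n. JT w j)) w) \<in> measurable OM (count_space UNIV)"
  proof (rule measurable_compose_countable[OF _ Suc.IH])
    fix z :: "int^'d"
    have "(\<lambda>v. z + v) \<in> measurable (count_space UNIV) (count_space (UNIV :: (int^'d) set))" by simp
    then show "(\<lambda>w. z + JT w n) \<in> measurable OM (count_space UNIV)"
      using JT_OM by (rule measurable_compose[rotated])
  qed
  then show ?case by (simp add: add.assoc)
qed

lemma Gw_OM[measurable]: "Measurable.pred OM (Gw e a x y)"
  unfolding Gw_def Wnw_def by measurable

lemma Cw_OM[measurable]: "Measurable.pred OM (Cw e a)"
  unfolding Cw_def Wnw_def by measurable

end

context frog begin

lemmas [measurable] = wk_meas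

definition BP :: "'d label \<Rightarrow> 'd src set" where
  "BP l = range (SE l) \<union> range (SJ l)"

lemma BX_BP: "BX l i \<subseteq> BP l" by (cases i) (auto simp: BX_def BP_def)

lemma G_Sg[measurable]: "BP l \<subseteq> B \<Longrightarrow> Measurable.pred (Sg B) (\<lambda>\<omega>. Gw e a x y (wk l \<omega>))"
  using BX_BP by (intro measurable_compose[OF wk_Sg Gw_OM]) blast

definition qy :: "int^'d \<Rightarrow> real \<Rightarrow> int^'d \<Rightarrow> int^'d \<Rightarrow> real" where
  "qy e a x y = prob {\<omega>\<in>space M. Gw e a x y (wk None \<omega>)}"

lemma prob_G: "prob {\<omega>\<in>space M. Gw e a x y (wk l \<omega>)} = qy e a x y"
proof -
  have S: "{w\<in>space OM. Gw e a x y w} \<in> sets OM" by measurable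
  have eq: "wk l -` {w\<in>space OM. Gw e a x y w} \<inter> space M = {\<omega>\<in>space M. Gw e a x y (wk l \<omega>)}" for l
    using measurable_space[OF wk_meas] by auto
  show ?thesis using prob_wk_eq[OF S, of l None] unfolding eq qy_def .
qed

lemma N_pmf: "0 < rho \<Longrightarrow> prob {\<omega>\<in>space M. N y \<omega> = j} = rho ^ j / fact j * exp (- rho)"
  using fm unfolding frog_model_def by simp

lemma By_prob:
  assumes rho: "0 < rho"
  shows "prob {\<omega>\<in>space M. \<forall>k. k < N y \<omega> \<longrightarrow> \<not> Gw e a x y (wk (Some (y, k)) \<omega>)} = exp (- (rho * qy e a x y))"
proof -
  define q where "q = qy e a x y"
  define D where "D j = {\<omega>\<in>space M. N y \<omega> = j \<and> (\<forall>k<j. \<not> Gw e a x y (wk (Some (y, k)) \<omega>))}" for j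
  have Dj: "prob (D j) = rho ^ j / fact j * exp (- rho) * (1 - q) ^ j" for j
  proof -
    define I where "I = insert None (Some ` {..<j})"
    define Bk where "Bk i = (case i of None \<Rightarrow> {SN y} | Some k \<Rightarrow> BP (Some (y, k)))" for i
    define A where "A i = (case i of None \<Rightarrow> {\<omega>\<in>space M. N y \<omega> = j}
        | Some k \<Rightarrow> {\<omega>\<in>space M. \<not> Gw e a x y (wk (Some (y, k)) \<omega>)})" for i
    have dj: "disjoint_family_on Bk I"
      by (auto simp: disjoint_family_on_def Bk_def BP_def I_def split: option.splits)
    have AB: "A i \<in> sets (Sg (Bk i))" for i
    proof (cases i)
      case None
      have [measurable]: "N y \<in> measurable (Sg {SN y}) (count_space UNIV)" by (rule N_Sg) simp
      have "{\<omega>\<in>space (Sg {SN y}). N y \<omega> = j} \<in> sets (Sg {SN y})" by measurable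
      then show ?thesis using None by (simp add: A_def Bk_def)
    next
      case (Some k)
      have [measurable]: "Measurable.pred (Sg (BP (Some (y, k)))) (\<lambda>\<omega>. Gw e a x y (wk (Some (y, k)) \<omega>))"
        by (rule G_Sg) simp
      have "{\<omega>\<in>space (Sg (BP (Some (y, k)))). \<not> Gw e a x y (wk (Some (y, k)) \<omega>)} \<in> sets (Sg (BP (Some (y, k))))"
        by measurable
      then show ?thesis using Some by (simp add: A_def Bk_def)
    qed
    have "prob (\<Inter>i\<in>I. A i) = (\<Prod>i\<in>I. prob (A i))"
      by (rule blocks_prob[OF dj _ _ AB]) (auto simp: I_def)
    moreover have "(\<Inter>i\<in>I. A i) = D j" by (auto simp: I_def A_def D_def)
    moreover have "(\<Prod>i\<in>I. prob (A i)) = prob (A None) * (\<Prod>k\<in>{..<j}. prob (A (Some k)))"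
      unfolding I_def by (subst prod.insert) (auto simp: prod.reindex)
    moreover have "prob (A None) = rho ^ j / fact j * exp (- rho)" using N_pmf[OF rho] by (simp add: A_def)
    moreover have "prob (A (Some k)) = 1 - q" for k
    proof -
      have ev: "{\<omega>\<in>space M. Gw e a x y (wk (Some (y, k)) \<omega>)} \<in> events" by measurable
      have "A (Some k) = space M - {\<omega>\<in>space M. Gw e a x y (wk (Some (y, k)) \<omega>)}" by (auto simp: A_def)
      then show ?thesis using prob_compl[OF ev] prob_G by (simp add: q_def)
    qed
    ultimately show ?thesis by simp
  qed
  have D_ev: "D j \<in> events" for j unfolding D_def by measurable
  have "(\<lambda>j. prob (D j)) sums prob (\<Union>j. D j)"
    by (rule measure_UNION) (auto simp: D_ev disjoint_family_on_def D_def)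
  moreover have "(\<Union>j. D j) = {\<omega>\<in>space M. \<forall>k. k < N y \<omega> \<longrightarrow> \<not> Gw e a x y (wk (Some (y, k)) \<omega>)}"
    by (auto simp: D_def)
  moreover have "(\<lambda>j. prob (D j)) sums exp (- (rho * q))"
  proof -
    have "(\<lambda>j. (rho * (1 - q)) ^ j / fact j) sums exp (rho * (1 - q))"
      using exp_converges[of "rho * (1 - q)"] by (simp add: divide_inverse mult.commute)
    then have "(\<lambda>j. exp (- rho) * ((rho * (1 - q)) ^ j / fact j)) sums (exp (- rho) * exp (rho * (1 - q)))"
      by (rule sums_mult)
    moreover have "exp (- rho) * exp (rho * (1 - q)) = exp (- (rho * q))"
      by (simp add: exp_add[symmetric] algebra_simps)
    ultimately show ?thesis by (simp add: Dj power_mult_distrib mult_ac)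
  qed
  ultimately show ?thesis by (metis sums_unique2 q_def)
qed

end

context frog begin

definition BY :: "int^'d \<Rightarrow> 'd src set" where
  "BY y = {SN y} \<union> (\<Union>k. BP (Some (y, k)))"

lemma nogood_bound:
  assumes rho: "0 < rho" and c: "c \<le> prob {\<omega>\<in>space M. Cw e a (wk None \<omega>)}" "0 < c"
  shows "prob {\<omega>\<in>space M. \<forall>y k. k < N y \<omega> \<longrightarrow> \<not> Gw e a x y (wk (Some (y, k)) \<omega>)} \<le> exp (- (rho * (c / 2)))"
proof -
  define H where "H y = {\<omega>\<in>space M. Gw e a x y (wk None \<omega>)}" for y
  have H_ev: "H y \<in> events" for y unfolding H_def by measurable
  define Fn where "Fn n = {y :: int^'d. to_nat y < n}" for n
  have fin: "finite (Fn n)" for n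
  proof -
    have "Fn n = to_nat -` {..<n}" by (auto simp: Fn_def)
    then show ?thesis by (simp add: finite_vimageI)
  qed
  define AA where "AA n = (\<Union>y\<in>Fn n. H y)" for n
  have AA_ev: "AA n \<in> events" for n unfolding AA_def using fin H_ev by (intro sets.finite_UN) auto
  have inc: "incseq AA" unfolding AA_def Fn_def incseq_def by (auto intro: order.strict_trans2)
  have UA: "{\<omega>\<in>space M. Cw e a (wk None \<omega>)} \<subseteq> (\<Union>n. AA n)"
  proof
    fix \<omega> assume "\<omega> \<in> {\<omega>\<in>space M. Cw e a (wk None \<omega>)}"
    then obtain n where w: "\<omega> \<in> space M" "\<forall>j. 0 < ET (wk None \<omega>) j" "Wnw e a (wk None \<omega>) n"
      by (auto simp: Cw_def)
    define y where "y = x - (\<Sum>j<n. JT (wk None \<omega>) j)"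
    have "\<omega> \<in> H y" using w by (auto simp: H_def Gw_def y_def)
    moreover have "y \<in> Fn (Suc (to_nat y))" by (simp add: Fn_def)
    ultimately show "\<omega> \<in> (\<Union>n. AA n)" by (auto simp: AA_def)
  qed
  have lim: "(\<lambda>n. prob (AA n)) \<longlonglongrightarrow> prob (\<Union>n. AA n)"
    using AA_ev inc by (intro finite_Lim_measure_incseq) auto
  have "c \<le> prob (\<Union>n. AA n)"
  proof -
    have "(\<Union>n. AA n) \<in> events" using AA_ev by auto
    then have "prob {\<omega>\<in>space M. Cw e a (wk None \<omega>)} \<le> prob (\<Union>n. AA n)" using UA by (rule finite_measure_mono[rotated])
    then show ?thesis using c(1) by linarith
  qed
  then have "c / 2 < prob (\<Union>n. AA n)" using c(2) by linarith
  then have "eventually (\<lambda>n. c / 2 < prob (AA n)) sequentially" using lim by (rule order_tendstoD(1)[rotated])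
  then obtain n where n: "c / 2 < prob (AA n)" by (meson eventually_sequentially order_refl)
  have sumq: "c / 2 \<le> (\<Sum>y\<in>Fn n. qy e a x y)"
  proof -
    have "prob (AA n) \<le> (\<Sum>y\<in>Fn n. prob (H y))" unfolding AA_def using fin H_ev by (intro measure_UNION_le) auto
    moreover have "prob (H y) = qy e a x y" for y unfolding H_def by (rule prob_G)
    ultimately show ?thesis using n by simp
  qed
  have ne: "Fn n \<noteq> {}" using sumq c(2) by auto
  define By where "By y = {\<omega>\<in>space M. \<forall>k. k < N y \<omega> \<longrightarrow> \<not> Gw e a x y (wk (Some (y, k)) \<omega>)}" for y
  have dj: "disjoint_family_on BY (Fn n)" by (auto simp: disjoint_family_on_def BY_def BP_def)
  have BS: "By y \<in> sets (Sg (BY y))" for y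
  proof -
    have [measurable]: "N y \<in> measurable (Sg (BY y)) (count_space UNIV)" by (rule N_Sg) (simp add: BY_def)
    have [measurable]: "Measurable.pred (Sg (BY y)) (\<lambda>\<omega>. Gw e a x y (wk (Some (y, k)) \<omega>))" for k
      by (rule G_Sg) (auto simp: BY_def)
    have "{\<omega>\<in>space (Sg (BY y)). \<forall>k. k < N y \<omega> \<longrightarrow> \<not> Gw e a x y (wk (Some (y, k)) \<omega>)} \<in> sets (Sg (BY y))"
      by measurable
    then show ?thesis by (simp add: By_def)
  qed
  have "prob (\<Inter>y\<in>Fn n. By y) = (\<Prod>y\<in>Fn n. prob (By y))"
    by (rule blocks_prob[OF dj fin ne BS])
  also have "\<dots> = (\<Prod>y\<in>Fn n. exp (- (rho * qy e a x y)))" unfolding By_def using By_prob[OF rho] by simp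
  also have "\<dots> = exp (- (rho * (\<Sum>y\<in>Fn n. qy e a x y)))"
    using fin by (simp add: exp_sum[symmetric] sum_negf sum_distrib_left)
  also have "\<dots> \<le> exp (- (rho * (c / 2)))" using sumq rho by simp
  finally have P: "prob (\<Inter>y\<in>Fn n. By y) \<le> exp (- (rho * (c / 2)))" .
  have "prob {\<omega>\<in>space M. \<forall>y k. k < N y \<omega> \<longrightarrow> \<not> Gw e a x y (wk (Some (y, k)) \<omega>)} \<le> prob (\<Inter>y\<in>Fn n. By y)"
  proof (rule finite_measure_mono)
    show "{\<omega>\<in>space M. \<forall>y k. k < N y \<omega> \<longrightarrow> \<not> Gw e a x y (wk (Some (y, k)) \<omega>)} \<subseteq> (\<Inter>y\<in>Fn n. By y)"
      by (auto simp: By_def)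
    show "(\<Inter>y\<in>Fn n. By y) \<in> events" using BS fin ne by (intro sets.finite_INT Sg_sets) auto
  qed
  then show ?thesis using P by linarith
qed

end

context frog begin

lemma bad_bound:
  fixes L :: nat and i0 :: 'd
  assumes L: "1 \<le> L" and rho: "rho = sqrt (real L)" and pp: "0 < pp i0"
  defines "Kc \<equiv> (exp (- dl) - exp (- (2*dl))) * pp i0 * exp (- (2*dl)) / 2"
  shows "\<exists>A\<in>sets M. {\<omega>\<in>space M. rfront i0 N E J (real L) \<omega> < ereal (8 * real L)} \<subseteq> A \<and>
          measure M A \<le> 10 * real L * exp (- (sqrt (real L) * (Kc / 2)))"
proof -
  let ?e = "axis i0 1 :: int^'d"
  have dl: "dl = 1/10" by (simp add: dl_def)
  have Kc: "0 < Kc" unfolding Kc_def using pp by (simp add: dl)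
  have rho0: "0 < rho" using L rho by simp
  define NG where "NG m = {\<omega>\<in>space M. \<forall>y k. k < N y \<omega> \<longrightarrow> \<not> Gw ?e (real m * dl) (axis i0 (int m)) y (wk (Some (y, k)) \<omega>)}" for m
  have NG_ev: "NG m \<in> events" for m unfolding NG_def by measurable
  have NGp: "prob (NG m) \<le> exp (- (sqrt (real L) * (Kc / 2)))" for m
  proof -
    have "Kc \<le> prob {\<omega>\<in>space M. Cw ?e (real m * dl) (wk None \<omega>)}"
      unfolding Kc_def by (rule core_prob) (simp add: dl)
    from nogood_bound[OF rho0 this Kc] show ?thesis by (simp add: NG_def rho)
  qed
  define A where "A = (\<Union>m\<in>{..<10*L-2}. NG m)"
  have A_ev: "A \<in> events" unfolding A_def using NG_ev by auto
  have "prob A \<le> (\<Sum>m\<in>{..<10*L-2}. prob (NG m))" unfolding A_def using NG_ev by (intro measure_UNION_le) auto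
  also have "\<dots> \<le> (\<Sum>m\<in>{..<10*L-2}. exp (- (sqrt (real L) * (Kc / 2))))" by (intro sum_mono NGp)
  also have "\<dots> = real (10*L-2) * exp (- (sqrt (real L) * (Kc / 2)))" by simp
  also have "\<dots> \<le> 10 * real L * exp (- (sqrt (real L) * (Kc / 2)))"
    using L by (intro mult_right_mono) (auto simp: of_nat_diff)
  finally have PA: "prob A \<le> 10 * real L * exp (- (sqrt (real L) * (Kc / 2)))" .
  have sub: "{\<omega>\<in>space M. rfront i0 N E J (real L) \<omega> < ereal (8 * real L)} \<subseteq> A"
  proof
    fix \<omega> assume w: "\<omega> \<in> {\<omega>\<in>space M. rfront i0 N E J (real L) \<omega> < ereal (8 * real L)}"
    show "\<omega> \<in> A"
    proof (rule ccontr)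
      assume "\<omega> \<notin> A"
      then have "\<forall>m < 10*L - 2. \<exists>y k. k < N y \<omega> \<and> Gw ?e (real m * dl) (axis i0 (int m)) y (wk (Some(y,k)) \<omega>)"
        using w by (auto simp: A_def NG_def)
      then have "ereal (8 * real L) \<le> rfront i0 N E J (real L) \<omega>" by (rule chain[OF L])
      then show False using w leD by blast
    qed
  qed
  show ?thesis using A_ev sub PA by blast
qed

end

theorem lemma5p3:
  fixes pp pm :: "'d::finite \<Rightarrow> real" and i0 :: 'd
  assumes "\<forall>i. 0 < pp i \<and> pp i \<le> pm i \<and> pm i < 1"
    and "(\<Sum>i\<in>UNIV. pp i + pm i) = 1"
  shows "\<exists>c>0. \<forall>L::nat. L \<ge> 1 \<longrightarrow>
    (\<forall>(M::'a measure) N E J. frog_model M pp pm (sqrt (real L)) N E J \<longrightarrow>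
       (\<exists>A\<in>sets M. {\<omega>\<in>space M. rfront i0 N E J (real L) \<omega> < ereal (8 * real L)} \<subseteq> A \<and>
          measure M A \<le> c * real L * exp (- sqrt (real L) / c)))"
proof -
  define Kc where "Kc = (exp (- dl) - exp (- (2*dl))) * pp i0 * exp (- (2*dl)) / 2"
  have pp: "0 < pp i0" using assms(1) by blast
  have Kc: "0 < Kc" unfolding Kc_def using pp by (simp add: dl_def)
  define c where "c = max 10 (2 / Kc)"
  have c0: "0 < c" by (simp add: c_def)
  show ?thesis
  proof (intro exI[of _ c] conjI allI impI c0)
    fix L :: nat and M :: "'a measure" and N E J
    assume L: "1 \<le> L" and fm: "frog_model M pp pm (sqrt (real L)) N E J"
    interpret frog M pp pm "sqrt (real L)" N E J by standard (rule fm)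
    obtain A where A: "A \<in> sets M" "{\<omega>\<in>space M. rfront i0 N E J (real L) \<omega> < ereal (8 * real L)} \<subseteq> A"
      "measure M A \<le> 10 * real L * exp (- (sqrt (real L) * (Kc / 2)))"
      using bad_bound[OF L refl pp] unfolding Kc_def by blast
    have "10 * real L * exp (- (sqrt (real L) * (Kc / 2))) \<le> c * real L * exp (- sqrt (real L) / c)"
    proof (rule mult_mono)
      show "10 * real L \<le> c * real L" by (intro mult_right_mono) (auto simp: c_def)
      have "1 / c \<le> Kc / 2"
      proof -
        have "2 / Kc \<le> c" by (simp add: c_def)
        then show ?thesis using Kc c0 by (simp add: field_simps)
      qed
      then have "sqrt (real L) * (1 / c) \<le> sqrt (real L) * (Kc / 2)" by (intro mult_left_mono) auto
      then show "exp (- (sqrt (real L) * (Kc / 2))) \<le> exp (- sqrt (real L) / c)" by simp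
    qed (auto simp: c_def)
    then show "\<exists>A\<in>sets M. {\<omega>\<in>space M. rfront i0 N E J (real L) \<omega> < ereal (8 * real L)} \<subseteq> A \<and>
          measure M A \<le> c * real L * exp (- sqrt (real L) / c)"
      using A by (intro bexI[of _ A]) auto
  qed
qed

end
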